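(* Let $\mathcal{D}_I$ be the class of all finite irreflexive digraphs. (1) A class $\mathcal{C}\subseteq\mathcal{D}_I$ that is downward closed under the homomorphic image ordering is well quasi-ordered (under that ordering) if and only if it is finite. (2) For any finite set $\{O_1,\dots,O_k\}\subseteq\mathcal{D}_I$, the class $\mathrm{Av}(O_1,\dots,O_k)$, taken with respect to either the standard or the strong homomorphic image ordering, is not well quasi-ordered (under the respective ordering).
   Context: A digraph is a set $D$ with a binary relation $E(D)\subseteq D\times D$; it is irreflexive if no loop $(x,x)$ is an edge. A homomorphism maps edges to edges (so within irreflexive digraphs no edge can be collapsed to a vertex); it is strong if additionally every edge of the target between vertices of the image is the image of an edge. Standard homomorphic image ordering: $A\preceq B$ iff there is a surjective homomorphism $B\to A$; strong: iff there is a surjective strong homomorphism $B\to A$. $\mathrm{Av}(B)=\{x\in\mathcal{D}_I: b\not\preceq x\ \forall b\in B\}$. Well quasi-ordered means no infinite strictly decreasing sequence and no infinite antichain; digraphs considered up to isomorphism (finite means finitely many isomorphism types). *)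

theory Defs
  imports Main
begin

text \<open>A digraph is represented by a vertex set and an edge relation on it.
  Vertices are natural numbers, so every finite digraph is represented up to isomorphism.\<close>

type_synonym digraph = "nat set \<times> (nat \<times> nat) set"

definition verts :: "digraph \<Rightarrow> nat set" where "verts G = fst G"
definition edges :: "digraph \<Rightarrow> (nat \<times> nat) set" where "edges G = snd G"

definition DI :: "digraph set" where
  "DI = {G. finite (verts G) \<and> edges G \<subseteq> verts G \<times> verts G \<and> (\<forall>x. (x, x) \<notin> edges G)}"

definition is_hom :: "digraph \<Rightarrow> digraph \<Rightarrow> (nat \<Rightarrow> nat) \<Rightarrow> bool" where
  "is_hom G H f \<longleftrightarrow> f ` verts G \<subseteq> verts H \<and>
     (\<forall>x y. (x, y) \<in> edges G \<longrightarrow> (f x, f y) \<in> edges H)"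

definition is_strong_hom :: "digraph \<Rightarrow> digraph \<Rightarrow> (nat \<Rightarrow> nat) \<Rightarrow> bool" where
  "is_strong_hom G H f \<longleftrightarrow> is_hom G H f \<and>
     (\<forall>u v. (u, v) \<in> edges H \<longrightarrow> u \<in> f ` verts G \<longrightarrow> v \<in> f ` verts G \<longrightarrow>
        (\<exists>x y. (x, y) \<in> edges G \<and> f x = u \<and> f y = v))"

definition img_le :: "digraph \<Rightarrow> digraph \<Rightarrow> bool" where
  "img_le A B \<longleftrightarrow> (\<exists>f. is_hom B A f \<and> f ` verts B = verts A)"

definition strong_img_le :: "digraph \<Rightarrow> digraph \<Rightarrow> bool" where
  "strong_img_le A B \<longleftrightarrow> (\<exists>f. is_strong_hom B A f \<and> f ` verts B = verts A)"

definition digraph_iso :: "digraph \<Rightarrow> digraph \<Rightarrow> bool" where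
  "digraph_iso G H \<longleftrightarrow> (\<exists>f. bij_betw f (verts G) (verts H) \<and>
     (\<forall>x\<in>verts G. \<forall>y\<in>verts G. (x, y) \<in> edges G \<longleftrightarrow> (f x, f y) \<in> edges H))"

definition finite_upto_iso :: "digraph set \<Rightarrow> bool" where
  "finite_upto_iso C \<longleftrightarrow> (\<exists>F. finite F \<and> F \<subseteq> C \<and> (\<forall>G\<in>C. \<exists>H\<in>F. digraph_iso G H))"

definition downward_closed :: "(digraph \<Rightarrow> digraph \<Rightarrow> bool) \<Rightarrow> digraph set \<Rightarrow> bool" where
  "downward_closed le C \<longleftrightarrow> (\<forall>x\<in>C. \<forall>y\<in>DI. le y x \<longrightarrow> y \<in> C)"

definition wqo_on :: "(digraph \<Rightarrow> digraph \<Rightarrow> bool) \<Rightarrow> digraph set \<Rightarrow> bool" where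
  "wqo_on le C \<longleftrightarrow>
     \<not> (\<exists>f::nat \<Rightarrow> digraph. \<forall>i. f i \<in> C \<and> le (f (Suc i)) (f i) \<and> \<not> le (f i) (f (Suc i))) \<and>
     \<not> (\<exists>f::nat \<Rightarrow> digraph. (\<forall>i. f i \<in> C) \<and> (\<forall>i j. i \<noteq> j \<longrightarrow> \<not> le (f i) (f j)))"

definition Av :: "(digraph \<Rightarrow> digraph \<Rightarrow> bool) \<Rightarrow> digraph set \<Rightarrow> digraph set" where
  "Av le B = {x \<in> DI. \<forall>b\<in>B. \<not> le b x}"

end

theory Submission
  imports Defs "HOL-Library.Infinite_Set"
begin

definition Kc :: "nat \<Rightarrow> digraph" where
  "Kc n = ({0..<n}, {(x,y). x < n \<and> y < n \<and> x \<noteq> y})"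

lemma Kc_verts[simp]: "verts (Kc n) = {0..<n}"
  by (simp add: Kc_def verts_def)

lemma Kc_edges[simp]: "edges (Kc n) = {(x,y). x < n \<and> y < n \<and> x \<noteq> y}"
  by (simp add: Kc_def edges_def)

lemma Kc_DI: "Kc n \<in> DI"
  by (auto simp: DI_def)

lemma img_le_Kc_card:
  assumes "A \<in> DI" "img_le A (Kc n)"
  shows "card (verts A) = n"
proof -
  obtain f where f: "is_hom (Kc n) A f" "f ` {0..<n} = verts A"
    using assms(2) by (auto simp: img_le_def)
  have "inj_on f {0..<n}"
  proof (rule inj_onI)
    fix x y assume "x \<in> {0..<n}" "y \<in> {0..<n}" "f x = f y"
    show "x = y"
    proof (rule ccontr)
      assume "x \<noteq> y"
      then have "(f x, f y) \<in> edges A" using f(1) \<open>x \<in> _\<close> \<open>y \<in> _\<close>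
        by (auto simp: is_hom_def)
      then show False using \<open>f x = f y\<close> assms(1) by (auto simp: DI_def)
    qed
  qed
  then show ?thesis using f(2) card_image by fastforce
qed

lemma Kc_le:
  assumes "G \<in> DI"
  shows "img_le (Kc (card (verts G))) G"
proof -
  have fin: "finite (verts G)" using assms by (simp add: DI_def)
  obtain h where h: "bij_betw h (verts G) {0..<card (verts G)}"
    using ex_bij_betw_finite_nat[OF fin] by blast
  have "is_hom G (Kc (card (verts G))) h"
    unfolding is_hom_def
  proof (intro conjI allI impI)
    show "h ` verts G \<subseteq> verts (Kc (card (verts G)))" using h by (simp add: bij_betw_def)
  next
    fix x y assume e: "(x, y) \<in> edges G"
    then have xy: "x \<in> verts G" "y \<in> verts G" "x \<noteq> y" using assms by (auto simp: DI_def)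
    then have "h x \<noteq> h y" using h by (auto simp: bij_betw_def inj_on_def)
    moreover have "h x < card (verts G)" "h y < card (verts G)"
      using xy h by (auto simp: bij_betw_def)
    ultimately show "(h x, h y) \<in> edges (Kc (card (verts G)))" by simp
  qed
  then show ?thesis unfolding img_le_def using h by (auto simp: bij_betw_def)
qed

lemma strong_imp: "strong_img_le A B \<Longrightarrow> img_le A B"
  by (auto simp: strong_img_le_def img_le_def is_strong_hom_def)

lemma img_le_trans:
  assumes "img_le A B" "img_le B C"
  shows "img_le A C"
proof -
  obtain f where f: "is_hom B A f" "f ` verts B = verts A" using assms(1) by (auto simp: img_le_def)
  obtain g where g: "is_hom C B g" "g ` verts C = verts B" using assms(2) by (auto simp: img_le_def)
  have "is_hom C A (f \<circ> g)" using f g unfolding is_hom_def by (metis comp_apply image_comp image_subset_iff)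
  moreover have "(f \<circ> g) ` verts C = verts A" using f g by (metis image_comp)
  ultimately show ?thesis unfolding img_le_def by (metis image_comp)
qed

lemma iso_sym:
  assumes "digraph_iso G H" shows "digraph_iso H G"
proof -
  obtain f where f: "bij_betw f (verts G) (verts H)"
    "\<forall>x\<in>verts G. \<forall>y\<in>verts G. (x, y) \<in> edges G \<longleftrightarrow> (f x, f y) \<in> edges H"
    using assms by (auto simp: digraph_iso_def)
  let ?g = "inv_into (verts G) f"
  have g: "bij_betw ?g (verts H) (verts G)" using f(1) by (rule bij_betw_inv_into)
  have "\<forall>u\<in>verts H. \<forall>v\<in>verts H. (u, v) \<in> edges H \<longleftrightarrow> (?g u, ?g v) \<in> edges G"
  proof (intro ballI)
    fix u v assume u: "u \<in> verts H" and v: "v \<in> verts H"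
    have gu: "?g u \<in> verts G" "f (?g u) = u" using u g f(1)
      by (auto simp: bij_betw_def intro: f_inv_into_f)
    have gv: "?g v \<in> verts G" "f (?g v) = v" using v g f(1)
      by (auto simp: bij_betw_def intro: f_inv_into_f)
    show "(u, v) \<in> edges H \<longleftrightarrow> (?g u, ?g v) \<in> edges G"
      using f(2) gu gv by metis
  qed
  then show ?thesis using g by (auto simp: digraph_iso_def)
qed

lemma iso_trans:
  assumes "digraph_iso G H" "digraph_iso H K" shows "digraph_iso G K"
proof -
  obtain f where f: "bij_betw f (verts G) (verts H)"
    "\<forall>x\<in>verts G. \<forall>y\<in>verts G. (x, y) \<in> edges G \<longleftrightarrow> (f x, f y) \<in> edges H"
    using assms(1) by (auto simp: digraph_iso_def)
  obtain g where g: "bij_betw g (verts H) (verts K)"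
    "\<forall>x\<in>verts H. \<forall>y\<in>verts H. (x, y) \<in> edges H \<longleftrightarrow> (g x, g y) \<in> edges K"
    using assms(2) by (auto simp: digraph_iso_def)
  have "bij_betw (g \<circ> f) (verts G) (verts K)" using f(1) g(1) by (rule bij_betw_trans)
  moreover have "\<forall>x\<in>verts G. \<forall>y\<in>verts G. (x, y) \<in> edges G \<longleftrightarrow> ((g \<circ> f) x, (g \<circ> f) y) \<in> edges K"
  proof (intro ballI)
    fix x y assume "x \<in> verts G" "y \<in> verts G"
    moreover then have "f x \<in> verts H" "f y \<in> verts H" using f(1) by (auto simp: bij_betw_def)
    ultimately show "(x, y) \<in> edges G \<longleftrightarrow> ((g \<circ> f) x, (g \<circ> f) y) \<in> edges K"
      using f(2) g(2) by simp
  qed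
  ultimately show ?thesis by (auto simp: digraph_iso_def)
qed

lemma iso_le:
  assumes "digraph_iso G H" "G \<in> DI"
  shows "img_le H G"
proof -
  obtain f where f: "bij_betw f (verts G) (verts H)"
    "\<forall>x\<in>verts G. \<forall>y\<in>verts G. (x, y) \<in> edges G \<longleftrightarrow> (f x, f y) \<in> edges H"
    using assms(1) by (auto simp: digraph_iso_def)
  have "is_hom G H f"
    unfolding is_hom_def
  proof (intro conjI allI impI)
    show "f ` verts G \<subseteq> verts H" using f(1) by (simp add: bij_betw_def)
  next
    fix x y assume e: "(x, y) \<in> edges G"
    then have "x \<in> verts G" "y \<in> verts G" using assms(2) by (auto simp: DI_def)
    then show "(f x, f y) \<in> edges H" using e f(2) by blast
  qed
  then show ?thesis using f(1) by (auto simp: img_le_def bij_betw_def)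
qed

lemma finite_pairs:
  fixes g :: "nat \<Rightarrow> 'b"
  assumes "finite F" "\<forall>i. g i \<in> F"
  shows "\<exists>i j. i < j \<and> g i = g j"
proof -
  have "\<not> inj g"
  proof
    assume "inj g"
    then have "finite (UNIV :: nat set)"
      using finite_imageD[of g UNIV] assms finite_subset[of "range g" F] by auto
    then show False by simp
  qed
  then obtain i j where "i \<noteq> j" "g i = g j" by (auto simp: inj_def)
  then show ?thesis by (metis linorder_neqE_nat)
qed


lemma canon:
  assumes "G \<in> DI" "card (verts G) < N"
  shows "\<exists>H \<in> Pow {..<N} \<times> Pow ({..<N} \<times> {..<N}). digraph_iso G H"
proof -
  have fin: "finite (verts G)" and sub: "edges G \<subseteq> verts G \<times> verts G"
    using assms by (auto simp: DI_def)
  obtain h where h: "bij_betw h (verts G) {0..<card (verts G)}"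
    using ex_bij_betw_finite_nat[OF fin] by blast
  define H where "H = ({0..<card (verts G)}, (\<lambda>(x,y). (h x, h y)) ` edges G)"
  have vH: "verts H = {0..<card (verts G)}" and eH: "edges H = (\<lambda>(x,y). (h x, h y)) ` edges G"
    by (auto simp: H_def verts_def edges_def)
  have inj: "inj_on h (verts G)" using h by (simp add: bij_betw_def)
  have "digraph_iso G H"
    unfolding digraph_iso_def
  proof (intro exI conjI ballI)
    show "bij_betw h (verts G) (verts H)" using h vH by simp
  next
    fix x y assume x: "x \<in> verts G" and y: "y \<in> verts G"
    show "(x, y) \<in> edges G \<longleftrightarrow> (h x, h y) \<in> edges H"
    proof
      assume "(x, y) \<in> edges G" then show "(h x, h y) \<in> edges H" unfolding eH by force
    next
      assume "(h x, h y) \<in> edges H"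
      then obtain a b where ab: "(a,b) \<in> edges G" "h a = h x" "h b = h y" unfolding eH by auto
      then have "a \<in> verts G" "b \<in> verts G" using sub by auto
      then have "a = x" "b = y" using ab x y inj by (auto simp: inj_on_def)
      then show "(x, y) \<in> edges G" using ab by simp
    qed
  qed
  moreover have "H \<in> Pow {..<N} \<times> Pow ({..<N} \<times> {..<N})"
  proof -
    have "fst H \<subseteq> {..<N}" using vH assms(2) by (auto simp: verts_def)
    moreover have "snd H \<subseteq> {..<N} \<times> {..<N}"
    proof
      fix p assume "p \<in> snd H"
      then obtain x y where "(x,y) \<in> edges G" "p = (h x, h y)" using eH by (auto simp: edges_def)
      then have "x \<in> verts G" "y \<in> verts G" using sub by auto
      then have "h x < card (verts G)" "h y < card (verts G)" using h by (auto simp: bij_betw_def)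
      then show "p \<in> {..<N} \<times> {..<N}" using \<open>p = _\<close> assms(2) by auto
    qed
    ultimately show ?thesis by (cases H) auto
  qed
  ultimately show ?thesis by blast
qed

lemma bounded_finite:
  assumes "C \<subseteq> DI" "\<forall>G\<in>C. card (verts G) < N"
  shows "finite_upto_iso C"
proof -
  define S where "S = Pow {..<N} \<times> Pow ({..<N} \<times> {..<N})"
  define T where "T = {H \<in> S. \<exists>G\<in>C. digraph_iso G H}"
  define r where "r H = (SOME G. G \<in> C \<and> digraph_iso G H)" for H
  have rT: "r H \<in> C \<and> digraph_iso (r H) H" if "H \<in> T" for H
  proof -
    from that obtain G where "G \<in> C \<and> digraph_iso G H" unfolding T_def by blast
    then show ?thesis unfolding r_def by (rule someI)
  qed
  have "finite S" unfolding S_def by (simp add: finite_cartesian_product)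
  moreover have "T \<subseteq> S" unfolding T_def by (rule Collect_restrict)
  ultimately have "finite T" by (rule finite_subset[rotated])
  then have F1: "finite (r ` T)" by (rule finite_imageI)
  have F2: "r ` T \<subseteq> C"
  proof (rule image_subsetI)
    fix H assume "H \<in> T" then show "r H \<in> C" using rT by blast
  qed
  have F3: "\<forall>G\<in>C. \<exists>H\<in>r ` T. digraph_iso G H"
  proof
    fix G assume G: "G \<in> C"
    have GD: "G \<in> DI" using assms(1) G by (rule subsetD)
    have Gc: "card (verts G) < N" using assms(2) G by (rule bspec)
    obtain H where H: "H \<in> S" "digraph_iso G H"
      using canon[OF GD Gc] unfolding S_def by (rule bexE)
    have HT: "H \<in> T" unfolding T_def using H G by (intro CollectI conjI bexI)
    then have "digraph_iso H (r H)" using rT iso_sym by blast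
    then have "digraph_iso G (r H)" using iso_trans H(2) by blast
    then show "\<exists>H\<in>r ` T. digraph_iso G H" using HT by (intro bexI[of _ "r H"] imageI)
  qed
  show ?thesis unfolding finite_upto_iso_def using F1 F2 F3 by (intro exI conjI)
qed

lemma same_class_le:
  fixes f :: "nat \<Rightarrow> digraph"
  assumes "finite_upto_iso C" "\<forall>i. f i \<in> C" "C \<subseteq> DI"
  shows "\<exists>i j. i < j \<and> img_le (f i) (f j) \<and> img_le (f j) (f i)"
proof -
  obtain F where F: "finite F" "F \<subseteq> C" "\<forall>G\<in>C. \<exists>H\<in>F. digraph_iso G H"
    using assms(1) by (auto simp: finite_upto_iso_def)
  define g where "g i = (SOME H. H \<in> F \<and> digraph_iso (f i) H)" for i
  have g: "g i \<in> F \<and> digraph_iso (f i) (g i)" for i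
    using F(3) assms(2) unfolding g_def by (metis (mono_tags, lifting) someI_ex)
  obtain i j where ij: "i < j" "g i = g j" using finite_pairs[of F g] F(1) g by blast
  have D: "f i \<in> DI" "f j \<in> DI" "g i \<in> DI" using assms F(2) g by auto
  have "img_le (f i) (g i)" using iso_le[OF iso_sym D(3)] g by blast
  moreover have "img_le (g i) (f j)" using iso_le[OF _ D(2)] g ij(2) by metis
  moreover have "img_le (f j) (g i)" using iso_le[OF iso_sym D(3)] g ij(2) by metis
  moreover have "img_le (g i) (f i)" using iso_le[OF _ D(1)] g by blast
  ultimately show ?thesis using ij(1) img_le_trans by blast
qed


lemma img_le_refl: "img_le G G"
  unfolding img_le_def is_hom_def by (intro exI[of _ id]) simp

lemma chain_le:
  fixes f :: "nat \<Rightarrow> digraph"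
  assumes "\<forall>i. img_le (f (Suc i)) (f i)"
  shows "img_le (f (Suc i + k)) (f (Suc i))"
proof (induction k)
  case 0 show ?case using img_le_refl by simp
next
  case (Suc k)
  have "img_le (f (Suc (Suc i + k))) (f (Suc i + k))" using assms by blast
  then show ?case using Suc img_le_trans by simp
qed

lemma Kc_antichain: "img_le (Kc a) (Kc b) \<Longrightarrow> a = b"
  using img_le_Kc_card[OF Kc_DI] by fastforce

lemma part1a:
  assumes "C \<subseteq> DI" "finite_upto_iso C"
  shows "wqo_on img_le C"
  unfolding wqo_on_def
proof (intro conjI notI)
  assume "\<exists>f::nat \<Rightarrow> digraph. \<forall>i. f i \<in> C \<and> img_le (f (Suc i)) (f i) \<and> \<not> img_le (f i) (f (Suc i))"
  then obtain f :: "nat \<Rightarrow> digraph" where f: "\<forall>i. f i \<in> C \<and> img_le (f (Suc i)) (f i) \<and> \<not> img_le (f i) (f (Suc i))"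
    by blast
  have fC: "\<forall>i. f i \<in> C" using f by blast
  obtain i j where ij: "i < j" "img_le (f i) (f j)"
    using same_class_le[OF assms(2) fC assms(1)] by blast
  have "\<forall>i. img_le (f (Suc i)) (f i)" using f by blast
  from chain_le[OF this, of i "j - Suc i"] have "img_le (f j) (f (Suc i))" using ij(1) by simp
  then have "img_le (f i) (f (Suc i))" using ij(2) img_le_trans by blast
  then show False using f by blast
next
  assume "\<exists>f::nat \<Rightarrow> digraph. (\<forall>i. f i \<in> C) \<and> (\<forall>i j. i \<noteq> j \<longrightarrow> \<not> img_le (f i) (f j))"
  then obtain f :: "nat \<Rightarrow> digraph" where fC: "\<forall>i. f i \<in> C" and f: "\<forall>i j. i \<noteq> j \<longrightarrow> \<not> img_le (f i) (f j)"
    by blast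
  obtain i j where ij: "i < j" "img_le (f i) (f j)"
    using same_class_le[OF assms(2) fC assms(1)] by blast
  then show False using f by (metis less_irrefl)
qed

lemma Kc_enum_antichain:
  assumes "infinite T"
  shows "\<forall>i j. i \<noteq> j \<longrightarrow> \<not> img_le (Kc (enumerate T i)) (Kc (enumerate T j))"
proof (intro allI impI notI)
  fix i j :: nat assume "i \<noteq> j" "img_le (Kc (enumerate T i)) (Kc (enumerate T j))"
  then have "enumerate T i = enumerate T j" using Kc_antichain by blast
  moreover have "enumerate T i \<noteq> enumerate T j"
    using \<open>i \<noteq> j\<close> enumerate_mono[OF _ assms] by (metis less_irrefl linorder_neqE_nat)
  ultimately show False by simp
qed

lemma part1b:
  assumes "C \<subseteq> DI" "downward_closed img_le C" "wqo_on img_le C"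
  shows "finite_upto_iso C"
proof (rule ccontr)
  assume nf: "\<not> finite_upto_iso C"
  define T where "T = {n. Kc n \<in> C}"
  have "\<forall>m. \<exists>n\<ge>m. n \<in> T"
  proof
    fix m
    have "\<not> (\<forall>G\<in>C. card (verts G) < m)" using bounded_finite[OF assms(1)] nf by blast
    then obtain G where G: "G \<in> C" "card (verts G) \<ge> m" by (auto simp: not_less)
    then have "G \<in> DI" using assms(1) by blast
    then have "Kc (card (verts G)) \<in> C"
      using assms(2) G(1) Kc_DI Kc_le unfolding downward_closed_def by blast
    then show "\<exists>n\<ge>m. n \<in> T" using G(2) unfolding T_def by blast
  qed
  then have inf: "infinite T" by (simp add: infinite_nat_iff_unbounded_le)
  have "\<forall>i. Kc (enumerate T i) \<in> C" using enumerate_in_set[OF inf] unfolding T_def by blast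
  moreover note Kc_enum_antichain[OF inf]
  ultimately have "\<exists>f::nat \<Rightarrow> digraph. (\<forall>i. f i \<in> C) \<and> (\<forall>i j. i \<noteq> j \<longrightarrow> \<not> img_le (f i) (f j))"
    by (intro exI[of _ "\<lambda>i. Kc (enumerate T i)"] conjI)
  then show False using assms(3) unfolding wqo_on_def by (elim conjE notE)
qed

lemma part2:
  assumes "finite B" "B \<subseteq> DI"
  shows "\<not> wqo_on img_le (Av img_le B) \<and> \<not> wqo_on strong_img_le (Av strong_img_le B)"
proof -
  define N where "N = Suc (\<Sum>b\<in>B. card (verts b))"
  have bN: "card (verts b) < N" if "b \<in> B" for b
    using member_le_sum[of b B "\<lambda>b. card (verts b)"] that assms(1) unfolding N_def by simp
  have notle: "\<not> img_le b (Kc (N + i))" if "b \<in> B" for b i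
  proof
    assume "img_le b (Kc (N + i))"
    then have "card (verts b) = N + i" using img_le_Kc_card assms(2) that by blast
    then show False using bN[OF that] by simp
  qed
  have anti: "\<not> img_le (Kc (N + i)) (Kc (N + j))" if "i \<noteq> j" for i j
    using Kc_antichain that by fastforce
  have A1: "\<forall>i. Kc (N + i) \<in> Av img_le B"
    using notle Kc_DI unfolding Av_def by blast
  have A2: "\<forall>i. Kc (N + i) \<in> Av strong_img_le B"
    using notle Kc_DI strong_imp unfolding Av_def by blast
  have E1: "\<exists>f::nat \<Rightarrow> digraph. (\<forall>i. f i \<in> Av img_le B) \<and> (\<forall>i j. i \<noteq> j \<longrightarrow> \<not> img_le (f i) (f j))"
    using A1 anti by (intro exI[of _ "\<lambda>i. Kc (N + i)"] conjI allI impI) auto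
  have E2: "\<exists>f::nat \<Rightarrow> digraph. (\<forall>i. f i \<in> Av strong_img_le B) \<and> (\<forall>i j. i \<noteq> j \<longrightarrow> \<not> strong_img_le (f i) (f j))"
    using A2 anti strong_imp by (intro exI[of _ "\<lambda>i. Kc (N + i)"] conjI allI impI) (simp, metis)
  have "\<not> wqo_on img_le (Av img_le B)"
    unfolding wqo_on_def using E1 by simp
  moreover have "\<not> wqo_on strong_img_le (Av strong_img_le B)"
    unfolding wqo_on_def using E2 by simp
  ultimately show ?thesis by blast
qed

theorem theorem4p4:
  shows "(\<forall>C. C \<subseteq> DI \<longrightarrow> downward_closed img_le C \<longrightarrow>
            (wqo_on img_le C \<longleftrightarrow> finite_upto_iso C))
       \<and> (\<forall>B. finite B \<longrightarrow> B \<subseteq> DI \<longrightarrow>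
            \<not> wqo_on img_le (Av img_le B) \<and> \<not> wqo_on strong_img_le (Av strong_img_le B))"
  using part1a part1b part2 by blast

end
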